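(* For all $\alpha\in(0,\pi/2)$ and $\beta\in[0,\alpha]$, the function $g(r)=\frac{1+Ar}{\sqrt{1+r^2+Br}}$ is concave at $r=r_0(\alpha,\beta)$, i.e. $g''(r_0(\alpha,\beta))\le 0$.
   Context: For $\alpha\in(0,\pi/2)$ and $\beta\in[0,\alpha]$, let $A=\frac{2\tan\beta}{\tan\alpha+\tan\beta}$, $B=2\cos(2\alpha)$, and $r_0(\alpha,\beta)=\frac{2A-B}{2-AB}$ (the critical point of $g$). *)

theory Defs
  imports "HOL-Analysis.Analysis"
begin

definition coefA :: "real \<Rightarrow> real \<Rightarrow> real" where
  "coefA \<alpha> \<beta> = 2 * tan \<beta> / (tan \<alpha> + tan \<beta>)"

definition coefB :: "real \<Rightarrow> real" where
  "coefB \<alpha> = 2 * cos (2 * \<alpha>)"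

definition r0 :: "real \<Rightarrow> real \<Rightarrow> real" where
  "r0 \<alpha> \<beta> = (2 * coefA \<alpha> \<beta> - coefB \<alpha>) / (2 - coefA \<alpha> \<beta> * coefB \<alpha>)"

definition gfun :: "real \<Rightarrow> real \<Rightarrow> real \<Rightarrow> real" where
  "gfun \<alpha> \<beta> r = (1 + coefA \<alpha> \<beta> * r) / sqrt (1 + r\<^sup>2 + coefB \<alpha> * r)"

end

theory Submission
  imports Defs
begin

lemma Qpos:
  fixes b r :: real assumes "b^2 < 4" shows "0 < 1 + r^2 + b*r"
proof -
  have "0 \<le> (r + b/2)^2" by simp
  moreover have "(r + b/2)^2 + (1 - b^2/4) = 1 + r^2 + b*r" by (simp add: power2_eq_square field_simps)
  ultimately show ?thesis using assms by linarith
qed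

lemma alg1:
  fixes a b r S :: real assumes "0 < S" "S*S = 1 + r^2 + b*r"
  shows "(a * S - (1 + a*r) * ((2*r + b) * (inverse S / 2))) / S^2
     = ((a - b/2) - r*(1 - a*b/2)) / ((1 + r^2 + b*r) * S)"
proof -
  have "(a * S - (1 + a*r) * ((2*r + b) * (inverse S / 2))) / S^2
      = (2*a*(S*S) - (1 + a*r) * (2*r + b)) / (2 * (S*S) * S)"
    using assms(1) by (simp add: field_simps power2_eq_square)
  also have "... = (2*a*(1 + r^2 + b*r) - (1 + a*r) * (2*r + b)) / (2 * (1 + r^2 + b*r) * S)"
    using assms(2) by simp
  also have "... = (2*((a - b/2) - r*(1 - a*b/2))) / (2*((1 + r^2 + b*r) * S))"
    by (simp add: algebra_simps power2_eq_square)
  also have "... = ((a - b/2) - r*(1 - a*b/2)) / ((1 + r^2 + b*r) * S)"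
    by (rule mult_divide_mult_cancel_left) simp
  finally show ?thesis .
qed

lemma d1:
  fixes a b r :: real assumes "b^2 < 4"
  shows "((\<lambda>r. (1 + a*r) / sqrt (1 + r^2 + b*r)) has_real_derivative
     ((a - b/2) - r*(1 - a*b/2)) / ((1 + r^2 + b*r) * sqrt (1 + r^2 + b*r))) (at r)"
proof -
  have Q: "0 < 1 + r^2 + b*r" using Qpos[OF assms] .
  have "((\<lambda>r. (1 + a*r) / sqrt (1 + r^2 + b*r)) has_real_derivative
     ((a * sqrt (1 + r^2 + b*r) - (1 + a*r) * ((2*r + b) * (inverse (sqrt (1 + r^2 + b*r)) / 2))) / (sqrt (1 + r^2 + b*r))^2)) (at r)"
    using Q
    by (auto intro!: derivative_eq_intros DERIV_real_sqrt simp: power2_eq_square)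
  moreover have "(a * sqrt (1 + r^2 + b*r) - (1 + a*r) * ((2*r + b) * (inverse (sqrt (1 + r^2 + b*r)) / 2))) / (sqrt (1 + r^2 + b*r))^2
     = ((a - b/2) - r*(1 - a*b/2)) / ((1 + r^2 + b*r) * sqrt (1 + r^2 + b*r))"
    using Q by (intro alg1) auto
  ultimately show ?thesis by simp
qed

lemma d2:
  fixes a b :: real assumes "b^2 < 4" and "a*b < 2"
  defines "r \<equiv> (2*a - b) / (2 - a*b)"
  shows "((\<lambda>r. ((a - b/2) - r*(1 - a*b/2)) / ((1 + r^2 + b*r) * sqrt (1 + r^2 + b*r)))
     has_real_derivative (-(1 - a*b/2)) / ((1 + r^2 + b*r) * sqrt (1 + r^2 + b*r))) (at r)"
proof -
  have Q: "0 < 1 + r^2 + b*r" using Qpos[OF assms(1)] .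
  have N: "(a - b/2) - r*(1 - a*b/2) = 0" unfolding r_def using assms(2)
    by (simp add: field_simps)
  have num: "((\<lambda>r. (a - b/2) - r*(1 - a*b/2)) has_real_derivative (-(1 - a*b/2))) (at r)"
    by (auto intro!: derivative_eq_intros)
  have den: "((\<lambda>r. (1 + r^2 + b*r) * sqrt (1 + r^2 + b*r)) has_real_derivative
      (2*r + b) * sqrt (1 + r^2 + b*r) + (1 + r^2 + b*r) * ((2*r + b) * (inverse (sqrt (1 + r^2 + b*r)) / 2))) (at r)"
    using Q by (auto intro!: derivative_eq_intros DERIV_real_sqrt simp: power2_eq_square)
  have "((1 + r^2 + b*r) * sqrt (1 + r^2 + b*r)) \<noteq> 0" using Q by simp
  from DERIV_divide[OF num den this] show ?thesis using Q N by (simp add: power2_eq_square)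
qed

theorem lemma7:
  fixes \<alpha> \<beta> :: real
  assumes "0 < \<alpha>" and "\<alpha> < pi / 2" and "0 \<le> \<beta>" and "\<beta> \<le> \<alpha>"
  shows "deriv (deriv (gfun \<alpha> \<beta>)) (r0 \<alpha> \<beta>) \<le> 0"
proof -
  define a where "a = coefA \<alpha> \<beta>"
  define b where "b = coefB \<alpha>"
  have ta: "0 < tan \<alpha>" using tan_gt_zero assms by auto
  have tb: "0 \<le> tan \<beta>" using assms tan_gt_zero[of \<beta>]
    by (cases "\<beta> = 0") auto
  have tab: "tan \<beta> \<le> tan \<alpha>" using assms by (intro tan_mono_le) auto
  have a0: "0 \<le> a" "a \<le> 1" unfolding a_def coefA_def using ta tb tab
    by (auto simp: field_simps)
  have s: "0 < sin (2*\<alpha>)" using assms by (intro sin_gt_zero) auto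
  have "(sin (2*\<alpha>))^2 + (cos (2*\<alpha>))^2 = 1" by simp
  moreover have "0 < (sin (2*\<alpha>))^2" using s by simp
  ultimately have c: "(cos (2*\<alpha>))^2 < 1" by linarith
  have b4: "b^2 < 4" unfolding b_def coefB_def using c by (simp add: power_mult_distrib)
  have babs: "\<bar>b\<bar> < 2" proof (rule power_less_imp_less_base)
    show "\<bar>b\<bar>^2 < 2^2" using b4 by simp
  qed simp
  have ab: "a*b < 2"
  proof -
    have "\<bar>a*b\<bar> \<le> \<bar>b\<bar>" using a0 by (simp add: abs_mult mult_left_le_one_le)
    then show ?thesis using babs by linarith
  qed
  have g: "gfun \<alpha> \<beta> = (\<lambda>r. (1 + a*r) / sqrt (1 + r^2 + b*r))"
    by (rule ext) (simp add: gfun_def a_def b_def)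
  have dg: "deriv (gfun \<alpha> \<beta>) = (\<lambda>r. ((a - b/2) - r*(1 - a*b/2)) / ((1 + r^2 + b*r) * sqrt (1 + r^2 + b*r)))"
    unfolding g by (rule ext, rule DERIV_imp_deriv, rule d1[OF b4])
  have r: "r0 \<alpha> \<beta> = (2*a - b) / (2 - a*b)" by (simp add: r0_def a_def b_def)
  define r where "r = (2*a - b) / (2 - a*b)"
  have Q: "0 < 1 + r^2 + b*r" using Qpos[OF b4] .
  have "deriv (deriv (gfun \<alpha> \<beta>)) (r0 \<alpha> \<beta>) = (-(1 - a*b/2)) / ((1 + r^2 + b*r) * sqrt (1 + r^2 + b*r))"
    unfolding dg r r_def by (rule DERIV_imp_deriv, rule d2[OF b4 ab])
  also have "... \<le> 0" using Q ab by (intro divide_nonpos_pos) auto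
  finally show ?thesis .
qed

end
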